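(* Let $\mathcal{M}=\{(x,y,z):x^2+y^2=1\}$ be the cylinder, let $G'$ be a $(2,2)$-sparse graph on vertices $v_1,\dots,v_n$ such that $v_1,\dots,v_4$ induce a proper subgraph isomorphic to $K_4$, and let $p=(p_1,\dots,p_n)\in\mathcal{M}^n$. Let $p^k=(p_1,p_2^k,p_3^k,p_4^k,p_5,\dots,p_n)\in\mathcal{M}^n$, $k=1,2,\dots$, with $p_i^k\to p_1$ as $k\to\infty$ for $i=2,3,4$, and suppose that (i) for each $k$ the framework $(K_4,(p_1,p_2^k,p_3^k,p_4^k))$ has a $2$-dimensional space of infinitesimal flexes on $\mathcal{M}$, and (ii) for each $k$ the space of infinitesimal flexes of $(G',p^k)$ on $\mathcal{M}$ has dimension greater than $2$. Then, with $p^\infty=(p_1,p_1,p_1,p_1,p_5,\dots,p_n)$, there is an infinitesimal flex $u'$ of $(G',p^\infty)$ on $\mathcal{M}$ of unit Euclidean norm of the form $u'=(0,0,0,0,u_5,\dots,u_n)$.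
   Context: A graph is $(2,2)$-sparse if every subgraph $H$ with at least one edge satisfies $|E(H)|\le 2|V(H)|-2$. For a graph with vertices $v_1,\dots,v_n$ and a (possibly degenerate, i.e. with coincident points) vector $q=(q_1,\dots,q_n)\in\mathcal{M}^n$, an infinitesimal flex of the framework $(G,q)$ on $\mathcal{M}$ is $u=(u_1,\dots,u_n)\in(\mathbb{R}^3)^n$ with each $u_i$ tangent to $\mathcal{M}$ at $q_i$ (i.e. $u_i\cdot N(q_i)=0$, where $N(q)=(2x,2y,0)$ at $q=(x,y,z)$) and $(u_i-u_j)\cdot(q_i-q_j)=0$ for every edge $v_iv_j$; equivalently $u$ lies in the kernel of the rigidity matrix $R_{\mathcal{M}}(G,q)$. *)

theory Defs
  imports "HOL-Analysis.Analysis" "HOL-Library.Numeral_Type"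
begin

definition simple_graph :: "'n set set \<Rightarrow> bool" where
  "simple_graph E \<longleftrightarrow> (\<forall>e\<in>E. card e = 2)"

definition sparse22 :: "('n::finite) set set \<Rightarrow> bool" where
  "sparse22 E \<longleftrightarrow>
     (\<forall>V F. F \<subseteq> E \<and> F \<noteq> {} \<and> (\<forall>e\<in>F. e \<subseteq> V) \<longrightarrow> card F + 2 \<le> 2 * card V)"

definition cylinder :: "(real^3) set" where
  "cylinder = {q. (q$1)\<^sup>2 + (q$2)\<^sup>2 = 1}"

definition cyl_normal :: "real^3 \<Rightarrow> real^3" where
  "cyl_normal q = vector [2 * q$1, 2 * q$2, 0]"

definition inf_flexes :: "('n::finite) set set \<Rightarrow> real^3^'n \<Rightarrow> (real^3^'n) set" where
  "inf_flexes E q = {u. (\<forall>i. u$i \<bullet> cyl_normal (q$i) = 0) \<and>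
                        (\<forall>i j. {i,j} \<in> E \<longrightarrow> (u$i - u$j) \<bullet> (q$i - q$j) = 0)}"

definition K4_edges :: "4 set set" where
  "K4_edges = {{i,j} | i j. i \<noteq> j}"

end

theory Submission
  imports Defs
begin

lemma h1: "((a::real^3) + b - (c + d)) \<bullet> e = (a - c) \<bullet> e + (b - d) \<bullet> e"
  by (simp add: inner_diff_left inner_add_left)
lemma h2: "(c *\<^sub>R (a::real^3) - c *\<^sub>R b) \<bullet> e = c * ((a - b) \<bullet> e)"
  by (simp add: inner_diff_left right_diff_distrib)
lemma subspace_flexes: "subspace (inf_flexes E q)"
  unfolding subspace_def inf_flexes_def
proof (intro conjI ballI allI impI)
  show "0 \<in> {u. (\<forall>i. u $ i \<bullet> cyl_normal (q $ i) = 0) \<and> (\<forall>i j. {i, j} \<in> E \<longrightarrow> (u $ i - u $ j) \<bullet> (q $ i - q $ j) = 0)}" by simp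
next
  fix x y assume x: "x \<in> {u. (\<forall>i. u $ i \<bullet> cyl_normal (q $ i) = 0) \<and>
          (\<forall>i j. {i, j} \<in> E \<longrightarrow> (u $ i - u $ j) \<bullet> (q $ i - q $ j) = 0)}"
   and y: "y \<in> {u. (\<forall>i. u $ i \<bullet> cyl_normal (q $ i) = 0) \<and>
          (\<forall>i j. {i, j} \<in> E \<longrightarrow> (u $ i - u $ j) \<bullet> (q $ i - q $ j) = 0)}"
  show "x + y \<in> {u. (\<forall>i. u $ i \<bullet> cyl_normal (q $ i) = 0) \<and>
          (\<forall>i j. {i, j} \<in> E \<longrightarrow> (u $ i - u $ j) \<bullet> (q $ i - q $ j) = 0)}"
    using x y by (simp only: mem_Collect_eq vector_add_component h1 inner_add_left) simp
next
  fix c x assume x: "x \<in> {u. (\<forall>i. u $ i \<bullet> cyl_normal (q $ i) = 0) \<and>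
          (\<forall>i j. {i, j} \<in> E \<longrightarrow> (u $ i - u $ j) \<bullet> (q $ i - q $ j) = 0)}"
  show "c *\<^sub>R x \<in> {u. (\<forall>i. u $ i \<bullet> cyl_normal (q $ i) = 0) \<and>
          (\<forall>i j. {i, j} \<in> E \<longrightarrow> (u $ i - u $ j) \<bullet> (q $ i - q $ j) = 0)}"
    using x by (simp only: mem_Collect_eq vector_scaleR_component h2 inner_scaleR_left) simp
qed

lemma restr_flex:
  fixes E :: "('n::finite) set set" and \<phi> :: "4 \<Rightarrow> 'n"
  assumes K4_sub: "\<forall>i j. i \<noteq> j \<longrightarrow> {\<phi> i, \<phi> j} \<in> E"
    and u: "u \<in> inf_flexes E q"
  shows "(\<chi> j. u $ \<phi> j) \<in> inf_flexes K4_edges (\<chi> j. q $ \<phi> j)"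
  using u K4_sub unfolding inf_flexes_def K4_edges_def
  by (auto simp: doubleton_eq_iff)

lemma kernel_exists:
  fixes E :: "('n::finite) set set" and \<phi> :: "4 \<Rightarrow> 'n" and q :: "real^3^'n"
  assumes K4_sub: "\<forall>i j. i \<noteq> j \<longrightarrow> {\<phi> i, \<phi> j} \<in> E"
    and K4: "dim (inf_flexes K4_edges (\<chi> j. q $ \<phi> j)) = 2"
    and G: "dim (inf_flexes E q) > 2"
  shows "\<exists>u \<in> inf_flexes E q. norm u = 1 \<and> (\<forall>j. u $ \<phi> j = 0)"
proof (rule ccontr)
  assume neg: "\<not> ?thesis"
  define S where "S = inf_flexes E q"
  define f where "f = (\<lambda>u::real^3^'n. (\<chi> j. u $ \<phi> j) :: real^3^4)"
  have sS: "subspace S" unfolding S_def by (rule subspace_flexes)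
  have lf: "linear f" unfolding f_def
    by (intro linearI) (auto simp: vec_eq_iff)
  have nz: "u = 0" if "u \<in> S" "f u = 0" for u
  proof (rule ccontr)
    assume "u \<noteq> 0"
    then have "norm u > 0" by simp
    have "(1 / norm u) *\<^sub>R u \<in> S" using sS that(1) by (simp add: subspace_scale)
    moreover have "norm ((1 / norm u) *\<^sub>R u) = 1" using \<open>norm u > 0\<close> by simp
    moreover have "\<forall>j. ((1 / norm u) *\<^sub>R u) $ \<phi> j = 0"
      using that(2) unfolding f_def by (simp add: vec_eq_iff)
    ultimately show False using neg unfolding S_def by blast
  qed
  have inj: "inj_on f (span S)"
  proof (rule inj_onI)
    fix x y assume xy: "x \<in> span S" "y \<in> span S" "f x = f y"
    have sp: "span S = S" using sS by (simp add: span_eq_iff)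
    have "x - y \<in> S" using xy(1,2) sS unfolding sp by (simp add: subspace_diff)
    moreover have "f (x - y) = 0" using xy(3) lf by (simp add: linear_diff)
    ultimately show "x = y" by (metis nz right_minus_eq)
  qed
  have "dim (f ` S) = dim S" using dim_image_eq[OF lf inj] .
  moreover have "f ` S \<subseteq> inf_flexes K4_edges (\<chi> j. q $ \<phi> j)"
    using restr_flex[OF K4_sub] unfolding S_def f_def by auto
  then have "dim (f ` S) \<le> 2" using dim_subset K4 by metis
  ultimately show False using G unfolding S_def by simp
qed

theorem lemma5p2:
  fixes E :: "('n::finite) set set"
    and \<phi> :: "4 \<Rightarrow> 'n"
    and p :: "real^3^'n"
    and pk :: "nat \<Rightarrow> real^3^'n"
  assumes simple: "simple_graph E"
    and sparse: "sparse22 E"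
    and phi_inj: "inj \<phi>"
    and K4_sub: "\<forall>i j. i \<noteq> j \<longrightarrow> {\<phi> i, \<phi> j} \<in> E"
    and proper: "range \<phi> \<noteq> UNIV"
    and p_on: "\<forall>i. p$i \<in> cylinder"
    and pk_on: "\<forall>k i. pk k $ i \<in> cylinder"
    and pk_fix1: "\<forall>k. pk k $ \<phi> 1 = p $ \<phi> 1"
    and pk_fix: "\<forall>k i. i \<notin> range \<phi> \<longrightarrow> pk k $ i = p $ i"
    and pk_lim: "\<forall>j\<in>{2,3,4}. (\<lambda>k. pk k $ \<phi> j) \<longlonglongrightarrow> p $ \<phi> 1"
    and K4_flex: "\<forall>k. dim (inf_flexes K4_edges (\<chi> j. pk k $ \<phi> j)) = 2"
    and G_flex: "\<forall>k. dim (inf_flexes E (pk k)) > 2"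
  shows "\<exists>u \<in> inf_flexes E (\<chi> i. if i \<in> range \<phi> then p $ \<phi> 1 else p $ i).
           norm u = 1 \<and> (\<forall>j. u $ \<phi> j = 0)"
proof -
  define q where "q = (\<chi> i. if i \<in> range \<phi> then p $ \<phi> 1 else p $ i)"
  have "\<forall>k. \<exists>u. u \<in> inf_flexes E (pk k) \<and> norm u = 1 \<and> (\<forall>j. u $ \<phi> j = 0)"
    using kernel_exists[OF K4_sub] K4_flex G_flex by blast
  from choice[OF this] obtain w where w0: "\<forall>k. w k \<in> inf_flexes E (pk k) \<and> norm (w k) = 1 \<and> (\<forall>j. w k $ \<phi> j = 0)"
    by blast
  have w: "\<And>k. w k \<in> inf_flexes E (pk k)" "\<And>k. norm (w k) = 1" "\<And>k j. w k $ \<phi> j = 0"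
    using w0 by auto
  have "seq_compact (sphere (0::real^3^'n) 1)"
    by (simp add: compact_imp_seq_compact)
  moreover have "\<forall>k. w k \<in> sphere 0 1" using w(2) by simp
  ultimately obtain l r where l: "l \<in> sphere 0 1" "strict_mono (r::nat\<Rightarrow>nat)"
      "(w \<circ> r) \<longlonglongrightarrow> l"
    by (rule seq_compactE)
  have wl: "(\<lambda>k. w (r k) $ i) \<longlonglongrightarrow> l $ i" for i
    using tendsto_vec_nth[OF l(3)] by (simp add: o_def)
  have pl: "(\<lambda>k. pk (r k) $ i) \<longlonglongrightarrow> q $ i" for i
  proof (cases "i \<in> range \<phi>")
    case True
    then obtain j where j: "i = \<phi> j" by auto
    have "(\<lambda>k. pk k $ \<phi> j) \<longlonglongrightarrow> p $ \<phi> 1"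
    proof -
      have "j = 1 \<or> j \<in> {2,3,4}" using exhaust_4[of j] by auto
      then show ?thesis
      proof
        assume "j = 1" then show ?thesis using pk_fix1 by simp
      next
        assume "j \<in> {2,3,4}" then show ?thesis using pk_lim by blast
      qed
    qed
    then have "(\<lambda>k. pk (r k) $ \<phi> j) \<longlonglongrightarrow> p $ \<phi> 1"
      using LIMSEQ_subseq_LIMSEQ[OF _ l(2)] by (simp add: o_def)
    then show ?thesis using j unfolding q_def by simp
  next
    case False
    then show ?thesis using pk_fix unfolding q_def by simp
  qed
  have l0: "l $ \<phi> j = 0" for j
    using LIMSEQ_unique[OF wl[of "\<phi> j"]] w(3) by simp
  have "l \<in> inf_flexes E q"
    unfolding inf_flexes_def
  proof (intro CollectI conjI allI impI)
    fix i
    show "l $ i \<bullet> cyl_normal (q $ i) = 0"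
    proof (cases "i \<in> range \<phi>")
      case True
      then obtain j where "i = \<phi> j" by blast
      then show ?thesis using l0[of j] by simp
    next
      case False
      have lim: "(\<lambda>k. w (r k) $ i \<bullet> cyl_normal (p $ i)) \<longlonglongrightarrow> l $ i \<bullet> cyl_normal (p $ i)"
        by (rule tendsto_inner[OF wl tendsto_const])
      have z: "w (r k) $ i \<bullet> cyl_normal (p $ i) = 0" for k
      proof -
        have e: "pk (r k) $ i = p $ i" using pk_fix False by blast
        have "w (r k) $ i \<bullet> cyl_normal (pk (r k) $ i) = 0"
          using w(1)[of "r k"] unfolding inf_flexes_def by blast
        then show ?thesis unfolding e .
      qed
      have "(\<lambda>k. 0::real) \<longlonglongrightarrow> l $ i \<bullet> cyl_normal (p $ i)"
        using lim unfolding z .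
      then have "l $ i \<bullet> cyl_normal (p $ i) = 0"
        unfolding LIMSEQ_const_iff by (rule sym)
      moreover have "q $ i = p $ i" using False unfolding q_def by simp
      ultimately show ?thesis by simp
    qed
  next
    fix i j assume e: "{i, j} \<in> E"
    have lim: "(\<lambda>k. (w (r k) $ i - w (r k) $ j) \<bullet> (pk (r k) $ i - pk (r k) $ j))
          \<longlonglongrightarrow> (l $ i - l $ j) \<bullet> (q $ i - q $ j)"
      by (rule tendsto_inner[OF tendsto_diff[OF wl wl] tendsto_diff[OF pl pl]])
    have z: "(w (r k) $ i - w (r k) $ j) \<bullet> (pk (r k) $ i - pk (r k) $ j) = 0" for k
      using w(1)[of "r k"] e unfolding inf_flexes_def by blast
    have "(\<lambda>k. 0::real) \<longlonglongrightarrow> (l $ i - l $ j) \<bullet> (q $ i - q $ j)"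
      using lim unfolding z .
    then show "(l $ i - l $ j) \<bullet> (q $ i - q $ j) = 0"
      unfolding LIMSEQ_const_iff by (rule sym)
  qed
  moreover have "norm l = 1" using l(1) by simp
  ultimately show ?thesis using l0 unfolding q_def by blast
qed

end
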